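(* Let $A$ be a set of $n$ items with costs $c(i)\ge 0$, each satisfying $c(i)\le B$ for a budget $B>0$, and let $v:2^A\to\mathbb{R}_{\ge0}$ be monotone subadditive with $v(\emptyset)=0$, accessible via a demand oracle. The algorithm SA-alg-max below outputs a set $S$ with $c(S)\le B$ and $v(S)\ge \frac18\max\{v(S')\,:\,S'\subseteq A,\ c(S')\le B\}$. SA-alg-max: let $v^*=\max_{i\in A}v(\{i\})$ and $\mathcal V=\{v^*,2v^*,\dots,nv^*\}$. For each $u\in\mathcal V$: set prices $p(i)=\frac{u}{2B}c(i)$, and let $T\in\arg\max_{S\subseteq A}\big(v(S)-\sum_{i\in S}p(i)\big)$ (obtained by a demand query); let $S_u=\emptyset$; if $v(T)<\frac u2$, continue to the next $u$; otherwise, going through the items of $T$ in decreasing order of $c(i)$, put items from $T$ into $S_u$ while preserving the budget constraint $c(S_u)\le B$. Output the set $S_u$ with the largest value $v(S_u)$ over all $u\in\mathcal V$.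
   Context: A demand oracle, given a price vector $p(1),\dots,p(n)$, returns a set $T\in\arg\max_{S\subseteq A}\big(v(S)-\sum_{i\in S}p(i)\big)$ in unit time. Subadditive: $v(S)+v(T)\ge v(S\cup T)$ for all $S,T$. *)

theory Defs
  imports Main "HOL.Real"
begin

definition demand_oracle :: "'a set \<Rightarrow> ('a set \<Rightarrow> real) \<Rightarrow> (('a \<Rightarrow> real) \<Rightarrow> 'a set) \<Rightarrow> bool" where
  "demand_oracle A v D \<longleftrightarrow> (\<forall>p. D p \<subseteq> A \<and>
      (\<forall>S. S \<subseteq> A \<longrightarrow> v S - (\<Sum>i\<in>S. p i) \<le> v (D p) - (\<Sum>i\<in>D p. p i)))"

definition cost_decreasing_order :: "'a set \<Rightarrow> ('a \<Rightarrow> real) \<Rightarrow> ('a set \<Rightarrow> 'a list) \<Rightarrow> bool" where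
  "cost_decreasing_order A c ord \<longleftrightarrow> (\<forall>T. T \<subseteq> A \<longrightarrow>
      distinct (ord T) \<and> set (ord T) = T \<and> sorted_wrt (\<lambda>x y. c x \<ge> c y) (ord T))"

fun greedy_fill :: "('a \<Rightarrow> real) \<Rightarrow> real \<Rightarrow> 'a set \<Rightarrow> 'a list \<Rightarrow> 'a set" where
  "greedy_fill c B S [] = S"
| "greedy_fill c B S (x # xs) =
     greedy_fill c B (if (\<Sum>i\<in>S. c i) + c x \<le> B then insert x S else S) xs"

definition vstar :: "'a set \<Rightarrow> ('a set \<Rightarrow> real) \<Rightarrow> real" where
  "vstar A v = Max ((\<lambda>i. v {i}) ` A)"

definition SA_values :: "'a set \<Rightarrow> ('a set \<Rightarrow> real) \<Rightarrow> real set" where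
  "SA_values A v = (\<lambda>k. real k * vstar A v) ` {1..card A}"

definition SA_set :: "('a \<Rightarrow> real) \<Rightarrow> real \<Rightarrow> ('a set \<Rightarrow> real) \<Rightarrow> (('a \<Rightarrow> real) \<Rightarrow> 'a set)
                       \<Rightarrow> ('a set \<Rightarrow> 'a list) \<Rightarrow> real \<Rightarrow> 'a set" where
  "SA_set c B v D ord u =
     (let p = (\<lambda>i. u / (2 * B) * c i); T = D p
      in if v T < u / 2 then {} else greedy_fill c B {} (ord T))"

end

theory Submission
  imports Defs
begin

lemma gf_sub: "greedy_fill c B S xs \<subseteq> S \<union> set xs"
proof (induction xs arbitrary: S)
  case Nil thus ?case by simp
next
  case (Cons x xs)
  have "(if (\<Sum>i\<in>S. c i) + c x \<le> B then insert x S else S) \<subseteq> insert x S" by auto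
  thus ?case using Cons.IH[of "if (\<Sum>i\<in>S. c i) + c x \<le> B then insert x S else S"]
    by auto
qed

lemma gf_sup: "S \<subseteq> greedy_fill c B S xs"
proof (induction xs arbitrary: S)
  case Nil thus ?case by simp
next
  case (Cons x xs)
  have "S \<subseteq> (if (\<Sum>i\<in>S. c i) + c x \<le> B then insert x S else S)" by auto
  thus ?case using Cons.IH[of "if (\<Sum>i\<in>S. c i) + c x \<le> B then insert x S else S"]
    by auto
qed

lemma gf_budget: "finite S \<Longrightarrow> (\<Sum>i\<in>S. c i) \<le> B \<Longrightarrow>
   finite (greedy_fill c B S xs) \<and> (\<Sum>i\<in>greedy_fill c B S xs. c i) \<le> B"
proof (induction xs arbitrary: S)
  case Nil thus ?case by simp
next
  case (Cons x xs)
  let ?S' = "if (\<Sum>i\<in>S. c i) + c x \<le> B then insert x S else S"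
  have "finite ?S'" using Cons by simp
  moreover have "(\<Sum>i\<in>?S'. c i) \<le> B"
    using Cons.prems by (cases "x \<in> S") (auto simp: insert_absorb)
  ultimately show ?case using Cons.IH by simp
qed

lemma gf_half:
  assumes "finite S" "\<forall>i\<in>S \<union> set xs. 0 \<le> c i"
    "sorted_wrt (\<lambda>x y. c x \<ge> c y) xs"
    "\<forall>y\<in>S. \<forall>z\<in>set xs. c z \<le> c y"
    "\<forall>i\<in>set xs. c i \<le> B"
  shows "greedy_fill c B S xs = S \<union> set xs \<or> B / 2 \<le> (\<Sum>i\<in>greedy_fill c B S xs. c i)"
  using assms
proof (induction xs arbitrary: S)
  case Nil thus ?case by simp
next
  case (Cons x xs)
  show ?case
  proof (cases "(\<Sum>i\<in>S. c i) + c x \<le> B")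
    case True
    have "greedy_fill c B (insert x S) xs = insert x S \<union> set xs \<or>
      B / 2 \<le> (\<Sum>i\<in>greedy_fill c B (insert x S) xs. c i)"
      apply (rule Cons.IH)
      using Cons.prems by auto
    thus ?thesis using True by simp
  next
    case False
    have "S \<noteq> {}" using False Cons.prems by auto
    then obtain y where y: "y \<in> S" by auto
    have "c y \<le> (\<Sum>i\<in>S. c i)"
      using Cons.prems y by (intro member_le_sum) auto
    moreover have "c x \<le> c y" using Cons.prems y by auto
    ultimately have h: "B / 2 \<le> (\<Sum>i\<in>S. c i)" using False by linarith
    let ?R = "greedy_fill c B S xs"
    have fin: "finite ?R" using gf_sub[of c B S xs] Cons.prems(1)
      by (meson List.finite_set finite_UnI finite_subset)
    have "(\<Sum>i\<in>S. c i) \<le> (\<Sum>i\<in>?R. c i)"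
      apply (rule sum_mono2[OF fin gf_sup])
      using gf_sub[of c B S xs] Cons.prems(2) by auto
    thus ?thesis using h False by simp
  qed
qed

lemma key:
  assumes fin: "finite A" and cB: "\<forall>i\<in>A. 0 \<le> c i \<and> c i \<le> B" and Bp: "B > 0"
    and sub: "\<forall>X Y. X \<subseteq> A \<and> Y \<subseteq> A \<longrightarrow> v (X \<union> Y) \<le> v X + v Y"
    and dem: "demand_oracle A v D" and ordd: "cost_decreasing_order A c ord"
    and u: "u \<ge> 0" and X: "X \<subseteq> A" "(\<Sum>i\<in>X. c i) \<le> B" "v X \<ge> u"
  shows "v (SA_set c B v D ord u) \<ge> u / 4"
proof -
  define p where "p = (\<lambda>i. u / (2 * B) * c i)"
  define T where "T = D p"
  have TA: "T \<subseteq> A" using dem unfolding demand_oracle_def T_def by auto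
  have finT: "finite T" using TA fin finite_subset by auto
  have opt: "\<And>Y. Y \<subseteq> A \<Longrightarrow> v Y - (\<Sum>i\<in>Y. p i) \<le> v T - (\<Sum>i\<in>T. p i)"
    using dem unfolding demand_oracle_def T_def by auto
  have psum: "\<And>Y. (\<Sum>i\<in>Y. p i) = u / (2 * B) * (\<Sum>i\<in>Y. c i)"
    unfolding p_def by (simp add: sum_distrib_left)
  have "u / (2 * B) * (\<Sum>i\<in>X. c i) \<le> u / (2 * B) * B"
    using X u Bp by (intro mult_left_mono) auto
  also have "\<dots> = u / 2" using Bp by simp
  finally have pX: "(\<Sum>i\<in>X. p i) \<le> u / 2" using psum by simp
  have cT: "0 \<le> (\<Sum>i\<in>T. c i)" using TA cB by (intro sum_nonneg) auto
  have pT: "0 \<le> (\<Sum>i\<in>T. p i)" using psum cT u Bp by simp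
  have vT: "v T - (\<Sum>i\<in>T. p i) \<ge> u / 2" using opt[OF X(1)] pX X(3) by linarith
  hence vT2: "v T \<ge> u / 2" using pT by linarith
  define R where "R = greedy_fill c B {} (ord T)"
  have SA: "SA_set c B v D ord u = R"
  proof -
    have "\<not> v (D p) < u / 2" using vT2 unfolding T_def by linarith
    thus ?thesis unfolding SA_set_def R_def T_def Let_def p_def[symmetric] by simp
  qed
  have o: "distinct (ord T) \<and> set (ord T) = T \<and> sorted_wrt (\<lambda>x y. c x \<ge> c y) (ord T)"
    using ordd TA unfolding cost_decreasing_order_def by auto
  have RT: "R \<subseteq> T" using gf_sub[of c B "{}" "ord T"] o unfolding R_def by auto
  have "R = T \<or> B / 2 \<le> (\<Sum>i\<in>R. c i)"
    using gf_half[of "{}" "ord T" c B] o TA cB unfolding R_def by auto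
  thus ?thesis
  proof
    assume "R = T" thus ?thesis using SA vT2 u by simp
  next
    assume h: "B / 2 \<le> (\<Sum>i\<in>R. c i)"
    have "v (T - R) - (\<Sum>i\<in>T - R. p i) \<le> v T - (\<Sum>i\<in>T. p i)" using opt TA by (meson Diff_subset subset_trans)
    moreover have "(\<Sum>i\<in>T. p i) = (\<Sum>i\<in>R. p i) + (\<Sum>i\<in>T - R. p i)"
      using finT RT by (metis add.commute sum.subset_diff)
    moreover have "u / (2 * B) * (B / 2) \<le> u / (2 * B) * (\<Sum>i\<in>R. c i)"
      using h u Bp by (intro mult_left_mono) auto
    moreover have "u / (2 * B) * (B / 2) = u / 4" using Bp by simp
    moreover have "v T \<le> v R + v (T - R)"
    proof -
      have "T = R \<union> (T - R)" using RT by blast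
      moreover have "R \<subseteq> A" "T - R \<subseteq> A" using RT TA by blast+
      ultimately show ?thesis using sub by metis
    qed
    ultimately show ?thesis unfolding SA using psum[of R] by linarith
  qed
qed

lemma card_bound:
  assumes "finite F" "F \<subseteq> A" "finite A" "v {} = 0"
    and sub: "\<forall>X Y. X \<subseteq> A \<and> Y \<subseteq> A \<longrightarrow> v (X \<union> Y) \<le> v X + v Y"
  shows "v F \<le> real (card F) * vstar A v"
  using assms(1,2)
proof (induction F rule: finite_induct)
  case empty thus ?case using assms by simp
next
  case (insert x F)
  have "v (insert x F) \<le> v {x} + v F" using sub insert.prems
    by (metis insert_is_Un insert_subset empty_subsetI)
  moreover have "v {x} \<le> vstar A v" unfolding vstar_def
    using insert.prems assms(3) by (intro Max_ge) auto
  ultimately show ?case using insert by (simp add: algebra_simps)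
qed

theorem lemma3p5:
  fixes A :: "'a set" and c :: "'a \<Rightarrow> real" and B :: real and v :: "'a set \<Rightarrow> real"
    and D :: "('a \<Rightarrow> real) \<Rightarrow> 'a set" and ord :: "'a set \<Rightarrow> 'a list"
    and u0 :: real and S :: "'a set"
  assumes "finite A" and "A \<noteq> {}"
    and "B > 0"
    and "\<forall>i\<in>A. 0 \<le> c i \<and> c i \<le> B"
    and "v {} = 0"
    and "\<forall>X. X \<subseteq> A \<longrightarrow> 0 \<le> v X"
    and "\<forall>X Y. X \<subseteq> Y \<and> Y \<subseteq> A \<longrightarrow> v X \<le> v Y"
    and "\<forall>X Y. X \<subseteq> A \<and> Y \<subseteq> A \<longrightarrow> v (X \<union> Y) \<le> v X + v Y"
    and "demand_oracle A v D"
    and "cost_decreasing_order A c ord"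
    and "u0 \<in> SA_values A v"
    and "S = SA_set c B v D ord u0"
    and "\<forall>u\<in>SA_values A v. v (SA_set c B v D ord u) \<le> v S"
  shows "(\<Sum>i\<in>S. c i) \<le> B \<and>
         (\<forall>S'. S' \<subseteq> A \<and> (\<Sum>i\<in>S'. c i) \<le> B \<longrightarrow> v S' \<le> 8 * v S)"
proof -
  note fin = assms(1) and cB = assms(4) and Bp = assms(3)
  define vs where "vs = vstar A v"
  obtain istar where ist: "istar \<in> A" "v {istar} = vs"
    proof -
    have "vs \<in> (\<lambda>i. v {i}) ` A" unfolding vs_def vstar_def using assms(1,2) by (intro Max_in) auto
    thus ?thesis using that by auto
  qed
  have vs0: "vs \<ge> 0" using ist assms(6) by force
  have SAs: "\<And>u. SA_set c B v D ord u \<subseteq> A"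
  proof -
    fix u
    have "D (\<lambda>i. u / (2 * B) * c i) \<subseteq> A" using assms(9) unfolding demand_oracle_def by auto
    thus "SA_set c B v D ord u \<subseteq> A"
      using gf_sub[of c B "{}" "ord (D (\<lambda>i. u / (2 * B) * c i))"] assms(10)
      unfolding SA_set_def Let_def cost_decreasing_order_def by auto
  qed
  have vS0: "0 \<le> v S" using SAs assms(6,12) by auto
  have part1: "(\<Sum>i\<in>S. c i) \<le> B"
    unfolding assms(12) SA_set_def Let_def using gf_budget[of "{}" c B] Bp by auto
  have part2: "v S' \<le> 8 * v S" if S': "S' \<subseteq> A" "(\<Sum>i\<in>S'. c i) \<le> B" for S'
  proof -
    have finS': "finite S'" using S' fin finite_subset by auto
    have cardle: "card S' \<le> card A" using S' fin card_mono by auto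
    have bound: "v S' \<le> real (card A) * vs"
    proof -
      have "v S' \<le> real (card S') * vs"
        using card_bound[OF finS' S'(1) fin assms(5,8)] unfolding vs_def .
      also have "\<dots> \<le> real (card A) * vs" using cardle vs0 by (intro mult_right_mono) auto
      finally show ?thesis .
    qed
    have cA: "card A \<ge> 1" using fin assms(2) by (simp add: Suc_le_eq card_gt_0_iff)
    have keyu: "v S \<ge> u / 4" if "u \<in> SA_values A v" "u \<ge> 0" "X \<subseteq> A"
      "(\<Sum>i\<in>X. c i) \<le> B" "v X \<ge> u" for u X
    proof -
      have "v (SA_set c B v D ord u) \<ge> u / 4"
        using key[OF fin cB Bp assms(8,9,10) that(2-5)] .
      thus ?thesis using assms(13) that(1) by fastforce
    qed
    show ?thesis
    proof (cases "vs = 0")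
      case True thus ?thesis using bound vS0 by simp
    next
      case False
      hence vsp: "vs > 0" using vs0 by simp
      show ?thesis
      proof (cases "v S' < vs")
        case True
        have "vs \<in> SA_values A v" unfolding SA_values_def vs_def
          using cA by (intro image_eqI[of _ _ 1]) auto
        hence "v S \<ge> vs / 4"
          using keyu[of vs "{istar}"] ist vs0 cB by auto
        thus ?thesis using True vS0 by linarith
      next
        case False
        define k where "k = nat \<lfloor>v S' / vs\<rfloor>"
        have q1: "v S' / vs \<ge> 1" using False vsp by simp
        have q2: "v S' / vs \<le> real (card A)" using bound vsp by (simp add: divide_le_eq)
        have k1: "k \<ge> 1" unfolding k_def using q1 by linarith
        have "\<lfloor>v S' / vs\<rfloor> \<le> int (card A)"
          using floor_mono[OF q2] by simp
        hence k2: "k \<le> card A" unfolding k_def by simp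
        have kl: "real k \<le> v S' / vs" unfolding k_def using q1 by linarith
        have ku: "v S' / vs < real k + 1" unfolding k_def using q1 by linarith
        have u1: "real k * vs \<le> v S'" using kl vsp by (simp add: le_divide_eq)
        have u2: "v S' < (real k + 1) * vs" using ku vsp by (simp add: divide_less_eq)
        have mem: "real k * vs \<in> SA_values A v" unfolding SA_values_def vs_def
          using k1 k2 by auto
        have "v S \<ge> real k * vs / 4"
          using keyu[OF mem _ S' u1] vs0 by simp
        moreover have "(real k + 1) * vs \<le> 2 * (real k * vs)" using k1 vsp
          by (simp add: algebra_simps)
        ultimately show ?thesis using u2 by linarith
      qed
    qed
  qed
  show ?thesis using part1 part2 by blast
qed

end
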